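(* Consider a quantum data-syndrome code of pure distance $d_p$ on $n$ qubits and $m$ measurement bits, subject to noise described by the channel supports $\Gamma=\{\gamma\subseteq[2n+m]: \mathrm{wt}_P(\gamma)\le t\}$ with channel distributions satisfying $P_\gamma(0)>\tfrac12$ for all $\gamma\in\Gamma$. If $t\le\lfloor\frac{d_p-1}{2}\rfloor$, then the total error distribution $P$ is identifiable from the syndrome statistics, i.e. any other family $(P'_\gamma)_{\gamma\in\Gamma}$ of channel distributions for the same $\Gamma$ with $P'_\gamma(0)>\tfrac12$ whose total error distribution $P'$ induces the same syndrome distribution satisfies $P'=P$.
   Context: Phase space representation: a Pauli operator on $n$ qubits (modulo phases) $X^{x_1}Z^{z_1}\otimes\cdots\otimes X^{x_n}Z^{z_n}$ is identified with $(x_1,\dots,x_n,z_1,\dots,z_n)\in\mathbb F_2^{2n}$. For $v=(x,z)\in\mathbb F_2^{2n}$ write $\overline v=(z,x)$. A quantum data-syndrome code is given by pairwise commuting stabilizer generators $g^{(1)},\dots,g^{(l)}\in\mathbb F_2^{2n}$ (i.e. $\overline{g^{(i)}}\cdot g^{(j)}=0$; the generated stabilizer group does not contain $-I$) and a classical code with generator matrix $G_C=[I_l\ A]\in\mathbb F_2^{l\times m}$; for $i\in[m]$ let $f^{(i)}=\sum_{j=1}^l (G_C)_{j,i}g^{(j)}$. Set $N=2n+m$. Errors are $e=(e_d,e_m)\in\mathbb F_2^{2n}\times\mathbb F_2^m=\mathbb F_2^N$, with syndrome $\mathrm{syn}(e)\in\mathbb F_2^m$, $\mathrm{syn}(e)_i=f^{(i)}\cdot\overline{e_d}+(e_m)_i$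 (mod 2). Vectors in $\mathbb F_2^N$ are identified with their supports in $[N]$. The Pauli weight of $e=(x,z,e_m)$ is $\mathrm{wt}_P(e)=|\{i\in[n]: x_i\ne0 \text{ or } z_i\neq 0\}|+|\{j: (e_m)_j\neq 0\}|$. The pure distance is $d_p=\min\{\mathrm{wt}_P(e): e\in\mathbb F_2^N\setminus\{0\},\ \mathrm{syn}(e)=0\}$. A noise model consists of $\Gamma\subseteq 2^{[N]}$ and for each $\gamma\in\Gamma$ a probability distribution $P_\gamma$ on $\mathbb F_2^N$ supported on vectors with support in $\gamma$; the total error distribution $P$ is the distribution of $\sum_\gamma e_\gamma$ with independent $e_\gamma\sim P_\gamma$. The syndrome statistics is the distribution of $\mathrm{syn}(e)$, $e\sim P$. *)

theory Defs
  imports "HOL-Probability.Probability"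
begin

text \<open>Vectors in F_2^N are identified with their supports (subsets of {..<N}),
  indices 0-based: x-part {0..<n}, z-part {n..<2n}, measurement part {2n..<2n+m}.
  Addition in F_2^N is coordinatewise parity.\<close>

text \<open>Value (mod 2, as a boolean: True = 1) of v \<cdot> overline w for v,w in F_2^{2n}.\<close>
definition symp :: "nat \<Rightarrow> nat set \<Rightarrow> nat set \<Rightarrow> bool" where
  "symp n v w = odd (card {k. k < n \<and> k \<in> v \<and> n + k \<in> w}
                   + card {k. k < n \<and> n + k \<in> v \<and> k \<in> w})"

definition GC :: "nat \<Rightarrow> (nat \<Rightarrow> nat \<Rightarrow> bool) \<Rightarrow> nat \<Rightarrow> nat \<Rightarrow> bool" where
  "GC l A j i = (if i < l then j = i else A j (i - l))"

definition fvec :: "nat \<Rightarrow> (nat \<Rightarrow> nat \<Rightarrow> bool) \<Rightarrow> (nat \<Rightarrow> nat set) \<Rightarrow> nat \<Rightarrow> nat set" where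
  "fvec l A g i = {k. odd (card {j. j < l \<and> GC l A j i \<and> k \<in> g j})}"

definition syn :: "nat \<Rightarrow> nat \<Rightarrow> nat \<Rightarrow> (nat \<Rightarrow> nat \<Rightarrow> bool) \<Rightarrow> (nat \<Rightarrow> nat set)
    \<Rightarrow> nat set \<Rightarrow> nat set" where
  "syn n m l A g e = {i. i < m \<and> (symp n (fvec l A g i) (e \<inter> {..<2*n}) \<noteq> (2*n + i \<in> e))}"

definition wtP :: "nat \<Rightarrow> nat \<Rightarrow> nat set \<Rightarrow> nat" where
  "wtP n m e = card {i. i < n \<and> (i \<in> e \<or> n + i \<in> e)} + card {j. j < m \<and> 2*n + j \<in> e}"

definition pure_distance :: "nat \<Rightarrow> nat \<Rightarrow> nat \<Rightarrow> (nat \<Rightarrow> nat \<Rightarrow> bool) \<Rightarrow> (nat \<Rightarrow> nat set) \<Rightarrow> nat" where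
  "pure_distance n m l A g =
     Min {wtP n m e | e. e \<subseteq> {..<2*n+m} \<and> e \<noteq> {} \<and> syn n m l A g e = {}}"

definition Gamma :: "nat \<Rightarrow> nat \<Rightarrow> nat \<Rightarrow> nat set set" where
  "Gamma n m t = {\<gamma>. \<gamma> \<subseteq> {..<2*n+m} \<and> wtP n m \<gamma> \<le> t}"

definition total_error :: "nat set set \<Rightarrow> (nat set \<Rightarrow> nat set pmf) \<Rightarrow> nat set pmf" where
  "total_error \<Gamma> P = map_pmf (\<lambda>E. {i. odd (card {\<gamma> \<in> \<Gamma>. i \<in> E \<gamma>})}) (Pi_pmf \<Gamma> {} P)"

definition syndrome_statistics :: "nat \<Rightarrow> nat \<Rightarrow> nat \<Rightarrow> (nat \<Rightarrow> nat \<Rightarrow> bool) \<Rightarrow> (nat \<Rightarrow> nat set)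
    \<Rightarrow> nat set set \<Rightarrow> (nat set \<Rightarrow> nat set pmf) \<Rightarrow> nat set pmf" where
  "syndrome_statistics n m l A g \<Gamma> P = map_pmf (syn n m l A g) (total_error \<Gamma> P)"

end

theory Submission
  imports Defs
begin

definition chi :: "nat set \<Rightarrow> nat set \<Rightarrow> real" where
  "chi x u = (-1) ^ card (x \<inter> u)"

definition sg :: "bool \<Rightarrow> real" where "sg b = (if b then -1 else 1)"

definition symd :: "nat set \<Rightarrow> nat set \<Rightarrow> nat set" where
  "symd u v = (u - v) \<union> (v - u)"

lemma sg_prod_card:
  assumes "finite K"
  shows "(\<Prod>j\<in>K. sg (Q j)) = (-1) ^ card {j\<in>K. Q j}"
proof -
  have "(\<Prod>j\<in>K. sg (Q j)) = (\<Prod>j\<in>K. if Q j then (-1::real) else 1)"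
    by (simp add: sg_def)
  also have "\<dots> = (\<Prod>j\<in>K \<inter> {j. Q j}. (-1::real)) * (\<Prod>j\<in>K \<inter> - {j. Q j}. 1)"
    by (rule prod.If_cases[OF assms])
  also have "\<dots> = (-1) ^ card {j\<in>K. Q j}"
  proof -
    have "K \<inter> {j. Q j} = {j\<in>K. Q j}" by auto
    then show ?thesis by simp
  qed
  finally show ?thesis .
qed

lemma sg_odd: "sg (odd c) = (-1) ^ c"
  by (simp add: sg_def)

lemma sg_neq: "sg (P \<noteq> Q) = sg P * sg Q"
  by (simp add: sg_def)

lemma chi_comm: "chi x u = chi u x"
  by (simp add: chi_def Int_commute)

lemma chi_prod:
  assumes "finite x"
  shows "chi x u = (\<Prod>j\<in>x. sg (j \<in> u))"
  using sg_prod_card[OF assms, of "\<lambda>j. j \<in> u"] by (simp add: chi_def Int_def)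

lemma chi_prodK:
  assumes "finite K" "x \<inter> u \<subseteq> K"
  shows "chi x u = (\<Prod>j\<in>K. sg (j \<in> x \<and> j \<in> u))"
proof -
  have "x \<inter> u = {j\<in>K. j \<in> x \<and> j \<in> u}" using assms by auto
  then show ?thesis using sg_prod_card[OF assms(1), of "\<lambda>j. j \<in> x \<and> j \<in> u"]
    by (simp add: chi_def)
qed

lemma chi_symd:
  assumes "finite x"
  shows "chi x (symd u v) = chi x u * chi x v"
proof -
  have "chi x (symd u v) = (\<Prod>j\<in>x. sg (j \<in> u) * sg (j \<in> v))"
    unfolding chi_prod[OF assms] by (intro prod.cong) (auto simp: symd_def sg_def)
  also have "\<dots> = chi x u * chi x v"
    by (simp add: prod.distrib chi_prod[OF assms])
  finally show ?thesis .
qed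

lemma chi_empty[simp]: "chi x {} = 1" "chi {} u = 1"
  by (simp_all add: chi_def)

lemma chi_single: "i \<in> u \<Longrightarrow> chi {i} u = -1"
  by (simp add: chi_def)

lemma symd_empty_iff: "symd u v = {} \<longleftrightarrow> u = v"
  by (auto simp: symd_def)

lemma sum_involution_zero:
  fixes f :: "'a \<Rightarrow> real"
  assumes "finite S" "\<And>v. v \<in> S \<Longrightarrow> g v \<in> S" "\<And>v. v \<in> S \<Longrightarrow> g (g v) = v"
    "\<And>v. v \<in> S \<Longrightarrow> f (g v) = - f v"
  shows "sum f S = 0"
proof -
  have "sum f S = sum (\<lambda>v. f (g v)) S"
    by (rule sum.reindex_bij_witness[of S g g]) (use assms in auto)
  also have "\<dots> = - sum f S" using assms(4) by (simp add: sum_negf)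
  finally show ?thesis by simp
qed

lemma orth:
  assumes "finite K" "w \<subseteq> K"
  shows "(\<Sum>a\<in>Pow K. chi a w) = (if w = {} then 2 ^ card K else 0)"
proof (cases "w = {}")
  case True
  then show ?thesis using assms by (simp add: card_Pow)
next
  case False
  then obtain i where i: "i \<in> w" by auto
  have fw: "finite w" using assms finite_subset by auto
  have "(\<Sum>a\<in>Pow K. chi a w) = 0"
  proof (rule sum_involution_zero[where g = "\<lambda>a. symd a {i}"])
    fix v assume "v \<in> Pow K"
    then show "symd v {i} \<in> Pow K" using i assms by (auto simp: symd_def)
    show "symd (symd v {i}) {i} = v" by (auto simp: symd_def)
    show "chi (symd v {i}) w = - chi v w"
      using chi_symd[OF fw, of v "{i}"] chi_single[OF i] by (simp add: chi_comm)
  qed (use assms in auto)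
  then show ?thesis using False by simp
qed

lemma core:
  assumes "finite K" "y \<subseteq> K"
  shows "(\<Sum>x\<in>Pow K. f x * (\<Sum>u\<in>Pow K. chi x u * chi y u)) = 2 ^ card K * f y"
proof -
  have "(\<Sum>x\<in>Pow K. f x * (\<Sum>u\<in>Pow K. chi x u * chi y u))
      = (\<Sum>x\<in>Pow K. f x * (if x = y then 2 ^ card K else 0))"
  proof (intro sum.cong refl)
    fix x assume x: "x \<in> Pow K"
    have "(\<Sum>u\<in>Pow K. chi x u * chi y u) = (\<Sum>u\<in>Pow K. chi u (symd x y))"
    proof (intro sum.cong refl)
      fix u assume "u \<in> Pow K"
      then have "finite u" using assms finite_subset by auto
      then show "chi x u * chi y u = chi u (symd x y)"
        using chi_symd[of u x y] by (simp add: chi_comm)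
    qed
    also have "\<dots> = (if x = y then 2 ^ card K else 0)"
    proof -
      have "symd x y \<subseteq> K" using x assms by (auto simp: symd_def)
      from orth[OF assms(1) this] show ?thesis by (simp add: symd_empty_iff)
    qed
    finally show "f x * (\<Sum>u\<in>Pow K. chi x u * chi y u) = f x * (if x = y then 2 ^ card K else 0)"
      by simp
  qed
  also have "\<dots> = 2 ^ card K * f y"
    using assms by (simp add: if_distrib[of "\<lambda>z. f _ * z"] sum.delta' cong: if_cong)
  finally show ?thesis .
qed

lemma four_inj:
  fixes f :: "nat set \<Rightarrow> real"
  assumes "finite K" "\<And>u. u \<subseteq> K \<Longrightarrow> (\<Sum>x\<in>Pow K. f x * chi x u) = 0" "y \<subseteq> K"
  shows "f y = 0"
proof -
  have "0 = (\<Sum>u\<in>Pow K. (\<Sum>x\<in>Pow K. f x * chi x u) * chi y u)"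
    using assms(2) by simp
  also have "\<dots> = (\<Sum>x\<in>Pow K. f x * (\<Sum>u\<in>Pow K. chi x u * chi y u))"
    unfolding sum_distrib_right
    by (subst sum.swap) (simp add: sum_distrib_left mult.assoc)
  also have "\<dots> = 2 ^ card K * f y" by (rule core[OF assms(1,3)])
  finally show ?thesis by simp
qed

lemma four_inv:
  fixes h :: "nat set \<Rightarrow> real"
  assumes "finite K" "u \<subseteq> K"
  shows "h u = (\<Sum>a\<in>Pow K. (\<Sum>v\<in>Pow K. h v * chi v a) / 2 ^ card K * chi a u)"
proof -
  have "(\<Sum>a\<in>Pow K. (\<Sum>v\<in>Pow K. h v * chi v a) * chi a u)
      = (\<Sum>v\<in>Pow K. h v * (\<Sum>a\<in>Pow K. chi v a * chi u a))"
    unfolding sum_distrib_right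
    by (subst sum.swap) (simp add: sum_distrib_left mult.assoc chi_comm[of _ u])
  also have "\<dots> = 2 ^ card K * h u" by (rule core[OF assms(1,2)])
  finally have "(\<Sum>a\<in>Pow K. (\<Sum>v\<in>Pow K. h v * chi v a) * chi a u) = 2 ^ card K * h u" .
  then show ?thesis
    by (simp add: sum_divide_distrib[symmetric] )
qed

lemma local_zero:
  fixes h :: "nat set \<Rightarrow> real"
  assumes "finite K" "\<gamma> \<subseteq> K" "a \<subseteq> K" "\<not> a \<subseteq> \<gamma>" "\<And>v. h v = h (v \<inter> \<gamma>)"
  shows "(\<Sum>v\<in>Pow K. h v * chi v a) = 0"
proof -
  obtain i where i: "i \<in> a" "i \<notin> \<gamma>" using assms(4) by auto
  have fa: "finite a" using finite_subset[OF assms(3) assms(1)] .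
  show ?thesis
  proof (rule sum_involution_zero[where g = "\<lambda>v. symd v {i}"])
    fix v assume "v \<in> Pow K"
    then show "symd v {i} \<in> Pow K" using i assms by (auto simp: symd_def)
    show "symd (symd v {i}) {i} = v" by (auto simp: symd_def)
    have "symd v {i} \<inter> \<gamma> = v \<inter> \<gamma>" using i by (auto simp: symd_def)
    then have "h (symd v {i}) = h v" using assms(5) by metis
    moreover have "chi (symd v {i}) a = - chi v a"
      using chi_symd[OF fa, of v "{i}"] chi_single[OF i(1)] by (simp add: chi_comm)
    ultimately show "h (symd v {i}) * chi (symd v {i}) a = - (h v * chi v a)" by simp
  qed (use assms in auto)
qed

lemma expect_sum:
  fixes f :: "nat set \<Rightarrow> real"
  assumes "finite K" "set_pmf Q \<subseteq> Pow K"
  shows "measure_pmf.expectation Q f = (\<Sum>x\<in>Pow K. pmf Q x * f x)"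
  using assms by (subst integral_measure_pmf[where A = "Pow K"]) auto

lemma expectation_prod_Pi_pmf_fin:
  fixes f :: "'a \<Rightarrow> 'b \<Rightarrow> real"
  assumes "finite A" "\<And>x. x \<in> A \<Longrightarrow> finite (B x)" "\<And>x. x \<in> A \<Longrightarrow> set_pmf (p x) \<subseteq> B x"
  shows "measure_pmf.expectation (Pi_pmf A d p) (\<lambda>h. \<Prod>x\<in>A. f x (h x))
       = (\<Prod>x\<in>A. measure_pmf.expectation (p x) (f x))"
proof -
  let ?E = "\<lambda>g x. if x \<in> A then g x else d"
  have fin: "finite (PiE_dflt A d B)" using assms by auto
  have sub: "set_pmf (Pi_pmf A d p) \<subseteq> PiE_dflt A d B"
  proof
    fix h assume "h \<in> set_pmf (Pi_pmf A d p)"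
    then have "h \<in> PiE_dflt A d (set_pmf \<circ> p)" by (simp add: set_Pi_pmf[OF assms(1)])
    then show "h \<in> PiE_dflt A d B" using assms(3) by (auto simp: PiE_dflt_def)
  qed
  have "measure_pmf.expectation (Pi_pmf A d p) (\<lambda>h. \<Prod>x\<in>A. f x (h x))
      = (\<Sum>h\<in>PiE_dflt A d B. pmf (Pi_pmf A d p) h * (\<Prod>x\<in>A. f x (h x)))"
    using sub fin by (subst integral_measure_pmf[where A = "PiE_dflt A d B"]) auto
  also have "\<dots> = (\<Sum>h\<in>PiE_dflt A d B. \<Prod>x\<in>A. pmf (p x) (h x) * f x (h x))"
    by (intro sum.cong refl) (auto simp: pmf_Pi' assms(1) PiE_dflt_def prod.distrib)
  also have "\<dots> = (\<Sum>g\<in>PiE A B. \<Prod>x\<in>A. pmf (p x) (?E g x) * f x (?E g x))"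
  proof -
    have inj: "inj_on ?E (PiE A B)"
    proof (rule inj_onI)
      fix g1 g2 assume g: "g1 \<in> PiE A B" "g2 \<in> PiE A B" "?E g1 = ?E g2"
      show "g1 = g2"
      proof (rule PiE_ext[OF g(1,2)])
        fix x assume "x \<in> A" then show "g1 x = g2 x" using fun_cong[OF g(3), of x] by simp
      qed
    qed
    show ?thesis
      unfolding dflt_image_PiE[symmetric, of A d B]
      by (subst sum.reindex[OF inj]) simp
  qed
  also have "\<dots> = (\<Sum>g\<in>PiE A B. \<Prod>x\<in>A. pmf (p x) (g x) * f x (g x))"
    by (intro sum.cong prod.cong refl) auto
  also have "\<dots> = (\<Prod>x\<in>A. \<Sum>y\<in>B x. pmf (p x) y * f x y)"
    by (rule prod_sum_PiE[symmetric]) (use assms in auto)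
  also have "\<dots> = (\<Prod>x\<in>A. measure_pmf.expectation (p x) (f x))"
  proof (intro prod.cong refl)
    fix x assume "x \<in> A"
    then show "(\<Sum>y\<in>B x. pmf (p x) y * f x y) = measure_pmf.expectation (p x) (f x)"
      using assms by (subst integral_measure_pmf[where A = "B x"]) auto
  qed
  finally show ?thesis .
qed

lemma chi_odd:
  assumes "finite u" "finite I"
  shows "chi u {k. odd (card {i\<in>I. k \<in> W i})} = (\<Prod>i\<in>I. chi u (W i))"
proof -
  have "chi u {k. odd (card {i\<in>I. k \<in> W i})} = (\<Prod>k\<in>u. \<Prod>i\<in>I. sg (k \<in> W i))"
    unfolding chi_prod[OF assms(1)]
    by (intro prod.cong refl) (simp add: sg_odd sg_prod_card[OF assms(2)])
  also have "\<dots> = (\<Prod>i\<in>I. chi u (W i))"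
    by (subst prod.swap) (simp add: chi_prod[OF assms(1)])
  finally show ?thesis .
qed

definition swapv :: "nat \<Rightarrow> nat set \<Rightarrow> nat set" where
  "swapv n v = {j. j < 2*n \<and> (if j < n then n + j \<in> v else j - n \<in> v)}"

definition uvec :: "nat \<Rightarrow> nat \<Rightarrow> (nat \<Rightarrow> nat \<Rightarrow> bool) \<Rightarrow> (nat \<Rightarrow> nat set) \<Rightarrow> nat set \<Rightarrow> nat set" where
  "uvec n l A g \<sigma> = {j. j < 2*n \<and> odd (card {i\<in>\<sigma>. j \<in> swapv n (fvec l A g i)})} \<union> (\<lambda>i. 2*n+i) ` \<sigma>"

lemma uvec_sub: "\<sigma> \<subseteq> {..<m} \<Longrightarrow> uvec n l A g \<sigma> \<subseteq> {..<2*n+m}"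
  by (auto simp: uvec_def)

lemma prod_split_add:
  fixes a b :: nat and F :: "nat \<Rightarrow> 'a::comm_monoid_mult"
  shows
  "(\<Prod>j\<in>{..<a+b}. F j) = (\<Prod>j\<in>{..<a}. F j) * (\<Prod>k\<in>{..<b}. F (a + k))"
proof -
  have "(\<Prod>j\<in>{..<a+b}. F j) = (\<Prod>j\<in>{0..<a}. F j) * (\<Prod>j\<in>{a..<a+b}. F j)"
    using prod.atLeastLessThan_concat[of 0 a "a+b" F] by (simp add: atLeast0LessThan)
  also have "(\<Prod>j\<in>{a..<a+b}. F j) = (\<Prod>k\<in>{0..<b}. F (k + a))"
    using prod.shift_bounds_nat_ivl[of F 0 a b] by (simp add: add.commute)
  finally show ?thesis by (simp add: atLeast0LessThan add.commute)
qed

lemma sg_symp: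
  "sg (symp n v w) = (\<Prod>k\<in>{..<n}. sg (k \<in> v \<and> n + k \<in> w)) * (\<Prod>k\<in>{..<n}. sg (n + k \<in> v \<and> k \<in> w))"
proof -
  have e1: "{k\<in>{..<n}. k \<in> v \<and> n + k \<in> w} = {k. k < n \<and> k \<in> v \<and> n + k \<in> w}" by auto
  have e2: "{k\<in>{..<n}. n + k \<in> v \<and> k \<in> w} = {k. k < n \<and> n + k \<in> v \<and> k \<in> w}" by auto
  show ?thesis
    unfolding symp_def sg_odd power_add sg_prod_card[OF finite_lessThan] e1 e2 ..
qed

lemma syn_chi:
  assumes e: "e \<subseteq> {..<2*n+m}" and s: "\<sigma> \<subseteq> {..<m}"
  shows "chi e (uvec n l A g \<sigma>) = chi \<sigma> (syn n m l A g e)"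
proof -
  let ?f = "fvec l A g"
  have fs: "finite \<sigma>" using s finite_subset by auto
  have "chi e (uvec n l A g \<sigma>) = (\<Prod>j\<in>{..<2*n+m}. sg (j \<in> e \<and> j \<in> uvec n l A g \<sigma>))"
    by (rule chi_prodK) (use e in auto)
  also have "\<dots> = (\<Prod>j\<in>{..<2*n}. sg (j \<in> e \<and> j \<in> uvec n l A g \<sigma>))
      * (\<Prod>i\<in>{..<m}. sg (2*n+i \<in> e \<and> 2*n+i \<in> uvec n l A g \<sigma>))"
    by (rule prod_split_add)
  also have "(\<Prod>j\<in>{..<2*n}. sg (j \<in> e \<and> j \<in> uvec n l A g \<sigma>))
      = (\<Prod>j\<in>{..<2*n}. \<Prod>i\<in>\<sigma>. sg (j \<in> e \<and> j \<in> swapv n (?f i)))"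
  proof (intro prod.cong refl)
    fix j assume j: "j \<in> {..<2*n}"
    then have "j \<in> uvec n l A g \<sigma> \<longleftrightarrow> odd (card {i\<in>\<sigma>. j \<in> swapv n (?f i)})"
      by (auto simp: uvec_def)
    then show "sg (j \<in> e \<and> j \<in> uvec n l A g \<sigma>) = (\<Prod>i\<in>\<sigma>. sg (j \<in> e \<and> j \<in> swapv n (?f i)))"
    proof (cases "j \<in> e")
      case True
      then show ?thesis using \<open>j \<in> uvec n l A g \<sigma> \<longleftrightarrow> _\<close>
        by (simp add: sg_odd sg_prod_card[OF fs])
    next
      case False
      then show ?thesis by (simp add: sg_def)
    qed
  qed
  also have "\<dots> = (\<Prod>i\<in>\<sigma>. \<Prod>j\<in>{..<2*n}. sg (j \<in> e \<and> j \<in> swapv n (?f i)))"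
    by (rule prod.swap)
  also have "\<dots> = (\<Prod>i\<in>\<sigma>. sg (symp n (?f i) (e \<inter> {..<2*n})))"
  proof (intro prod.cong refl)
    fix i
    have "(\<Prod>j\<in>{..<2*n}. sg (j \<in> e \<and> j \<in> swapv n (?f i)))
       = (\<Prod>k\<in>{..<n}. sg (k \<in> e \<and> k \<in> swapv n (?f i))) * (\<Prod>k\<in>{..<n}. sg (n+k \<in> e \<and> n+k \<in> swapv n (?f i)))"
      using prod_split_add[of _ n n] by (simp add: mult_2)
    also have "\<dots> = (\<Prod>k\<in>{..<n}. sg (n + k \<in> ?f i \<and> k \<in> e \<inter> {..<2*n})) * (\<Prod>k\<in>{..<n}. sg (k \<in> ?f i \<and> n + k \<in> e \<inter> {..<2*n}))"
    proof (intro arg_cong2[where f = "(*)"] prod.cong refl)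
      fix k assume "k \<in> {..<n}"
      then have k: "k < n" by simp
      have a1: "k \<in> swapv n (?f i) \<longleftrightarrow> n + k \<in> ?f i" using k by (simp add: swapv_def)
      have a2: "k \<in> e \<inter> {..<2*n} \<longleftrightarrow> k \<in> e" using k by simp
      show "sg (k \<in> e \<and> k \<in> swapv n (?f i)) = sg (n + k \<in> ?f i \<and> k \<in> e \<inter> {..<2*n})"
        unfolding a1 a2 by (simp add: conj_commute)
      have b1: "n + k \<in> swapv n (?f i) \<longleftrightarrow> k \<in> ?f i" using k by (simp add: swapv_def)
      have b2: "n + k \<in> e \<inter> {..<2*n} \<longleftrightarrow> n + k \<in> e" using k by simp
      show "sg (n + k \<in> e \<and> n + k \<in> swapv n (?f i)) = sg (k \<in> ?f i \<and> n + k \<in> e \<inter> {..<2*n})"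
        unfolding b1 b2 by (simp add: conj_commute)
    qed
    also have "\<dots> = sg (symp n (?f i) (e \<inter> {..<2*n}))"
      by (simp add: sg_symp)
    finally show "(\<Prod>j\<in>{..<2*n}. sg (j \<in> e \<and> j \<in> swapv n (?f i))) = sg (symp n (?f i) (e \<inter> {..<2*n}))" .
  qed
  also have "(\<Prod>i\<in>{..<m}. sg (2*n+i \<in> e \<and> 2*n+i \<in> uvec n l A g \<sigma>))
      = (\<Prod>i\<in>{..<m}. if i \<in> \<sigma> then sg (2*n+i \<in> e) else 1)"
  proof (intro prod.cong refl)
    fix i assume "i \<in> {..<m}"
    have "2*n+i \<in> uvec n l A g \<sigma> \<longleftrightarrow> i \<in> \<sigma>" by (auto simp: uvec_def)
    then show "sg (2*n+i \<in> e \<and> 2*n+i \<in> uvec n l A g \<sigma>) = (if i \<in> \<sigma> then sg (2*n+i \<in> e) else 1)"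
      by (simp add: sg_def)
  qed
  also have "\<dots> = (\<Prod>i\<in>\<sigma>. sg (2*n+i \<in> e))"
  proof -
    have "{..<m} \<inter> \<sigma> = \<sigma>" using s by auto
    then show ?thesis using prod.inter_restrict[OF finite_lessThan, of "\<lambda>i. sg (2*n+i \<in> e)" m \<sigma>]
      by simp
  qed
  also have "(\<Prod>i\<in>\<sigma>. sg (symp n (?f i) (e \<inter> {..<2*n}))) * (\<Prod>i\<in>\<sigma>. sg (2*n+i \<in> e))
      = (\<Prod>i\<in>\<sigma>. sg (i \<in> syn n m l A g e))"
    unfolding prod.distrib[symmetric]
  proof (intro prod.cong refl)
    fix i assume "i \<in> \<sigma>"
    then have "i < m" using s by auto
    then show "sg (symp n (?f i) (e \<inter> {..<2*n})) * sg (2*n+i \<in> e) = sg (i \<in> syn n m l A g e)"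
      by (auto simp: syn_def sg_def)
  qed
  also have "\<dots> = chi \<sigma> (syn n m l A g e)"
    by (simp add: chi_prod[OF fs])
  finally show ?thesis .
qed

definition ex :: "nat set pmf \<Rightarrow> nat set \<Rightarrow> real" where
  "ex Q u = measure_pmf.expectation Q (\<lambda>x. chi x u)"

lemma wtP_mono:
  assumes "a \<subseteq> b" shows "wtP n m a \<le> wtP n m b"
  unfolding wtP_def
proof (rule add_mono)
  show "card {i. i < n \<and> (i \<in> a \<or> n + i \<in> a)} \<le> card {i. i < n \<and> (i \<in> b \<or> n + i \<in> b)}"
    by (rule card_mono) (use assms in auto)
  show "card {j. j < m \<and> 2 * n + j \<in> a} \<le> card {j. j < m \<and> 2 * n + j \<in> b}"
    by (rule card_mono) (use assms in auto)
qed

lemma wtP_symd: "wtP n m (symd a b) \<le> wtP n m a + wtP n m b"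
proof -
  have "card {i. i < n \<and> (i \<in> symd a b \<or> n + i \<in> symd a b)}
     \<le> card ({i. i < n \<and> (i \<in> a \<or> n + i \<in> a)} \<union> {i. i < n \<and> (i \<in> b \<or> n + i \<in> b)})"
    by (rule card_mono) (auto simp: symd_def)
  also have "\<dots> \<le> card {i. i < n \<and> (i \<in> a \<or> n + i \<in> a)} + card {i. i < n \<and> (i \<in> b \<or> n + i \<in> b)}"
    by (rule card_Un_le)
  finally have 1: "card {i. i < n \<and> (i \<in> symd a b \<or> n + i \<in> symd a b)}
     \<le> card {i. i < n \<and> (i \<in> a \<or> n + i \<in> a)} + card {i. i < n \<and> (i \<in> b \<or> n + i \<in> b)}" .
  have "card {j. j < m \<and> 2 * n + j \<in> symd a b}
     \<le> card ({j. j < m \<and> 2 * n + j \<in> a} \<union> {j. j < m \<and> 2 * n + j \<in> b})"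
    by (rule card_mono) (auto simp: symd_def)
  also have "\<dots> \<le> card {j. j < m \<and> 2 * n + j \<in> a} + card {j. j < m \<and> 2 * n + j \<in> b}"
    by (rule card_Un_le)
  finally have 2: "card {j. j < m \<and> 2 * n + j \<in> symd a b}
     \<le> card {j. j < m \<and> 2 * n + j \<in> a} + card {j. j < m \<and> 2 * n + j \<in> b}" .
  from 1 2 show ?thesis unfolding wtP_def by linarith
qed

lemma dist_unique:
  assumes d: "int t \<le> (int (pure_distance n m l A g) - 1) div 2"
    and a: "a \<subseteq> {..<2*n+m}" and b: "b \<subseteq> {..<2*n+m}"
    and wa: "wtP n m a \<le> t" and wb: "wtP n m b \<le> t"
    and s: "syn n m l A g (symd a b) = {}"
  shows "a = b"
proof (rule ccontr)
  assume "a \<noteq> b"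
  then have ne: "symd a b \<noteq> {}" by (simp add: symd_empty_iff)
  have sub: "symd a b \<subseteq> {..<2*n+m}" using a b by (auto simp: symd_def)
  let ?S = "{wtP n m e | e. e \<subseteq> {..<2*n+m} \<and> e \<noteq> {} \<and> syn n m l A g e = {}}"
  have fin: "finite ?S"
  proof -
    have "?S \<subseteq> wtP n m ` Pow {..<2*n+m}" by auto
    then show ?thesis by (rule finite_subset) simp
  qed
  have mem: "wtP n m (symd a b) \<in> ?S" using ne sub s by blast
  have "pure_distance n m l A g \<le> wtP n m (symd a b)"
    unfolding pure_distance_def using fin mem by (rule Min_le)
  also have "\<dots> \<le> 2 * t" using wtP_symd[of n m a b] wa wb by linarith
  finally have "int (pure_distance n m l A g) \<le> 2 * int t" by linarith
  moreover have aux: "\<And>x y::int. y \<le> (x - 1) div 2 \<Longrightarrow> x \<le> 2*y \<Longrightarrow> False" by presburger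
  ultimately show False using d by blast
qed

lemma neg1pow: "(-1::real)^k = 1 \<or> (-1::real)^k = -1"
  by (induct k) auto

lemma chi_ge: "chi x u \<ge> -1"
  using neg1pow[of "card (x \<inter> u)"] unfolding chi_def by auto

lemma total_sub:
  assumes "finite \<Gamma>" "\<And>\<gamma>. \<gamma> \<in> \<Gamma> \<Longrightarrow> \<gamma> \<subseteq> K" "\<And>\<gamma>. \<gamma> \<in> \<Gamma> \<Longrightarrow> set_pmf (Q \<gamma>) \<subseteq> Pow \<gamma>"
  shows "set_pmf (total_error \<Gamma> Q) \<subseteq> Pow K"
proof
  fix X assume "X \<in> set_pmf (total_error \<Gamma> Q)"
  then obtain E where E: "E \<in> set_pmf (Pi_pmf \<Gamma> {} Q)" and X: "X = {i. odd (card {\<gamma> \<in> \<Gamma>. i \<in> E \<gamma>})}"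
    by (auto simp: total_error_def)
  have Eg: "E \<gamma> \<subseteq> \<gamma>" if "\<gamma> \<in> \<Gamma>" for \<gamma>
    using E that assms(3)[OF that] by (auto simp: set_Pi_pmf[OF assms(1)] PiE_dflt_def)
  show "X \<in> Pow K"
  proof (rule PowI, rule subsetI)
    fix i assume "i \<in> X"
    then have "card {\<gamma> \<in> \<Gamma>. i \<in> E \<gamma>} \<noteq> 0" using X by (auto elim: oddE)
    then obtain \<gamma> where "\<gamma> \<in> \<Gamma>" "i \<in> E \<gamma>" by (metis (no_types, lifting) card.empty empty_Collect_eq)
    then show "i \<in> K" using Eg assms(2) by blast
  qed
qed

lemma total_prod:
  assumes "finite \<Gamma>" "\<And>\<gamma>. \<gamma> \<in> \<Gamma> \<Longrightarrow> finite \<gamma>" "\<And>\<gamma>. \<gamma> \<in> \<Gamma> \<Longrightarrow> set_pmf (Q \<gamma>) \<subseteq> Pow \<gamma>"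
    "finite u"
  shows "ex (total_error \<Gamma> Q) u = (\<Prod>\<gamma>\<in>\<Gamma>. ex (Q \<gamma>) u)"
proof -
  have "ex (total_error \<Gamma> Q) u
      = measure_pmf.expectation (Pi_pmf \<Gamma> {} Q) (\<lambda>E. chi {i. odd (card {\<gamma> \<in> \<Gamma>. i \<in> E \<gamma>})} u)"
    by (simp add: ex_def total_error_def)
  also have "\<dots> = measure_pmf.expectation (Pi_pmf \<Gamma> {} Q) (\<lambda>E. \<Prod>\<gamma>\<in>\<Gamma>. chi (E \<gamma>) u)"
    by (simp add: chi_comm[of _ u] chi_odd[OF assms(4,1)])
  also have "\<dots> = (\<Prod>\<gamma>\<in>\<Gamma>. measure_pmf.expectation (Q \<gamma>) (\<lambda>x. chi x u))"
    by (rule expectation_prod_Pi_pmf_fin[where B = Pow]) (use assms in auto)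
  finally show ?thesis by (simp add: ex_def)
qed

lemma ex_pos:
  assumes "finite \<gamma>" "set_pmf Q \<subseteq> Pow \<gamma>" "pmf Q {} > 1/2"
  shows "ex Q u > 0"
proof -
  have "ex Q u = (\<Sum>x\<in>Pow \<gamma>. pmf Q x * chi x u)"
    unfolding ex_def by (rule expect_sum[OF assms(1,2)])
  also have "\<dots> \<ge> (\<Sum>x\<in>Pow \<gamma>. 2 * (pmf Q x * (if x = {} then 1 else 0)) - pmf Q x)"
  proof (rule sum_mono)
    fix x assume "x \<in> Pow \<gamma>"
    show "2 * (pmf Q x * (if x = {} then 1 else 0)) - pmf Q x \<le> pmf Q x * chi x u"
    proof (cases "x = {}")
      case True then show ?thesis by simp
    next
      case False
      have "pmf Q x * (-1) \<le> pmf Q x * chi x u"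
        by (rule mult_left_mono[OF chi_ge pmf_nonneg])
      then show ?thesis using False by simp
    qed
  qed
  also have "(\<Sum>x\<in>Pow \<gamma>. 2 * (pmf Q x * (if x = {} then 1 else 0)) - pmf Q x) = 2 * pmf Q {} - 1"
    using assms(1,2)
    by (simp add: sum_subtractf sum_distrib_left[symmetric] sum_pmf_eq_1 if_distrib[of "\<lambda>z. pmf Q _ * z"] sum.delta' cong: if_cong)
  finally show ?thesis using assms(3) by simp
qed

lemma ex_loc:
  assumes "finite \<gamma>" "set_pmf Q \<subseteq> Pow \<gamma>"
  shows "ex Q u = ex Q (u \<inter> \<gamma>)"
  unfolding ex_def expect_sum[OF assms]
proof (intro sum.cong refl)
  fix x assume "x \<in> Pow \<gamma>"
  then have "x \<inter> u = x \<inter> (u \<inter> \<gamma>)" by auto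
  then show "pmf Q x * chi x u = pmf Q x * chi x (u \<inter> \<gamma>)" by (simp add: chi_def)
qed

lemma ex_syn:
  assumes "set_pmf T \<subseteq> Pow {..<2*n+m}" "\<sigma> \<subseteq> {..<m}"
  shows "ex T (uvec n l A g \<sigma>) = measure_pmf.expectation (map_pmf (syn n m l A g) T) (\<lambda>y. chi \<sigma> y)"
  unfolding ex_def integral_map_pmf expect_sum[OF finite_lessThan assms(1)]
proof (intro sum.cong refl)
  fix x assume "x \<in> Pow {..<2*n+m}"
  then show "pmf T x * chi x (uvec n l A g \<sigma>) = pmf T x * chi \<sigma> (syn n m l A g x)"
    using syn_chi[of x n m \<sigma> l A g] assms(2) by simp
qed

lemma syn_empty: "syn n m l A g {} = {}"
  by (simp add: syn_def symp_def)

theorem corollary11: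
  fixes n m l t :: nat
    and g :: "nat \<Rightarrow> nat set"
    and A :: "nat \<Rightarrow> nat \<Rightarrow> bool"
    and P P' :: "nat set \<Rightarrow> nat set pmf"
  assumes "l \<le> m"
    and "\<forall>j<l. g j \<subseteq> {..<2*n}"
    and "\<forall>i<l. \<forall>j<l. \<not> symp n (g i) (g j)"
    and "int t \<le> (int (pure_distance n m l A g) - 1) div 2"
    and "\<forall>\<gamma>\<in>Gamma n m t. set_pmf (P \<gamma>) \<subseteq> Pow \<gamma> \<and> pmf (P \<gamma>) {} > 1/2"
    and "\<forall>\<gamma>\<in>Gamma n m t. set_pmf (P' \<gamma>) \<subseteq> Pow \<gamma> \<and> pmf (P' \<gamma>) {} > 1/2"
    and "syndrome_statistics n m l A g (Gamma n m t) P' = syndrome_statistics n m l A g (Gamma n m t) P"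
  shows "total_error (Gamma n m t) P' = total_error (Gamma n m t) P"
proof -
  define K where "K = {..<2*n+m}"
  define \<Gamma> where "\<Gamma> = Gamma n m t"
  have fK: "finite K" by (simp add: K_def)
  have \<Gamma>K: "\<gamma> \<subseteq> K" if "\<gamma> \<in> \<Gamma>" for \<gamma> using that by (simp add: \<Gamma>_def Gamma_def K_def)
  have f\<gamma>: "finite \<gamma>" if "\<gamma> \<in> \<Gamma>" for \<gamma> using \<Gamma>K[OF that] fK by (rule finite_subset)
  have f\<Gamma>: "finite \<Gamma>"
  proof -
    have "\<Gamma> \<subseteq> Pow K" using \<Gamma>K by blast
    then show ?thesis using finite_Pow_iff fK by (metis finite_subset)
  qed
  have P1: "set_pmf (P \<gamma>) \<subseteq> Pow \<gamma>" "pmf (P \<gamma>) {} > 1/2" if "\<gamma> \<in> \<Gamma>" for \<gamma>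
    using assms(5) that by (auto simp: \<Gamma>_def)
  have P2: "set_pmf (P' \<gamma>) \<subseteq> Pow \<gamma>" "pmf (P' \<gamma>) {} > 1/2" if "\<gamma> \<in> \<Gamma>" for \<gamma>
    using assms(6) that by (auto simp: \<Gamma>_def)
  have sub1: "set_pmf (total_error \<Gamma> P) \<subseteq> Pow K" by (rule total_sub[OF f\<Gamma> \<Gamma>K P1(1)])
  have sub2: "set_pmf (total_error \<Gamma> P') \<subseteq> Pow K" by (rule total_sub[OF f\<Gamma> \<Gamma>K P2(1)])
  have prod1: "ex (total_error \<Gamma> P) u = (\<Prod>\<gamma>\<in>\<Gamma>. ex (P \<gamma>) u)" if "finite u" for u
    by (rule total_prod[OF f\<Gamma> f\<gamma> P1(1) that])
  have prod2: "ex (total_error \<Gamma> P') u = (\<Prod>\<gamma>\<in>\<Gamma>. ex (P' \<gamma>) u)" if "finite u" for u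
    by (rule total_prod[OF f\<Gamma> f\<gamma> P2(1) that])
  have pos1: "ex (P \<gamma>) u > 0" if "\<gamma> \<in> \<Gamma>" for \<gamma> u by (rule ex_pos[OF f\<gamma>[OF that] P1[OF that]])
  have pos2: "ex (P' \<gamma>) u > 0" if "\<gamma> \<in> \<Gamma>" for \<gamma> u by (rule ex_pos[OF f\<gamma>[OF that] P2[OF that]])
  have tpos1: "ex (total_error \<Gamma> P) u > 0" if "finite u" for u
    unfolding prod1[OF that] by (rule prod_pos) (use pos1 in auto)
  have tpos2: "ex (total_error \<Gamma> P') u > 0" if "finite u" for u
    unfolding prod2[OF that] by (rule prod_pos) (use pos2 in auto)
  define h where "h \<gamma> u = ln (ex (P \<gamma>) u) - ln (ex (P' \<gamma>) u)" for \<gamma> u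
  define D where "D u = (\<Sum>\<gamma>\<in>\<Gamma>. h \<gamma> u)" for u
  have D_eq: "D u = ln (ex (total_error \<Gamma> P) u) - ln (ex (total_error \<Gamma> P') u)" if "finite u" for u
  proof -
    have "ln (\<Prod>\<gamma>\<in>\<Gamma>. ex (P \<gamma>) u) = (\<Sum>\<gamma>\<in>\<Gamma>. ln (ex (P \<gamma>) u))"
      by (rule ln_prod[OF f\<Gamma>]) (metis pos1 order_less_irrefl)
    moreover have "ln (\<Prod>\<gamma>\<in>\<Gamma>. ex (P' \<gamma>) u) = (\<Sum>\<gamma>\<in>\<Gamma>. ln (ex (P' \<gamma>) u))"
      by (rule ln_prod[OF f\<Gamma>]) (metis pos2 order_less_irrefl)
    ultimately show ?thesis by (simp add: D_def h_def prod1[OF that] prod2[OF that] sum_subtractf)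
  qed
  have D_syn: "D (uvec n l A g \<sigma>) = 0" if "\<sigma> \<subseteq> {..<m}" for \<sigma>
  proof -
    have fu: "finite (uvec n l A g \<sigma>)" using finite_subset[OF uvec_sub[OF that] finite_lessThan] .
    have "ex (total_error \<Gamma> P) (uvec n l A g \<sigma>) = ex (total_error \<Gamma> P') (uvec n l A g \<sigma>)"
    proof -
      have ss: "map_pmf (syn n m l A g) (total_error \<Gamma> P') = map_pmf (syn n m l A g) (total_error \<Gamma> P)"
        using assms(7) by (simp add: syndrome_statistics_def \<Gamma>_def)
      show ?thesis
        unfolding ex_syn[OF sub1[unfolded K_def] that, of l A g] ex_syn[OF sub2[unfolded K_def] that, of l A g] ss ..
    qed
    then show ?thesis using D_eq[OF fu] by simp
  qed
  define c where "c a = (\<Sum>v\<in>Pow K. D v * chi v a)" for a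
  have c_big: "c a = 0" if a: "a \<subseteq> K" "\<not> wtP n m a \<le> t" for a
  proof -
    have "c a = (\<Sum>\<gamma>\<in>\<Gamma>. \<Sum>v\<in>Pow K. h \<gamma> v * chi v a)"
      unfolding c_def D_def sum_distrib_right by (rule sum.swap)
    also have "\<dots> = 0"
    proof (rule sum.neutral, rule ballI)
      fix \<gamma> assume g: "\<gamma> \<in> \<Gamma>"
      have "\<not> a \<subseteq> \<gamma>"
      proof
        assume "a \<subseteq> \<gamma>"
        then have "wtP n m a \<le> wtP n m \<gamma>" by (rule wtP_mono)
        also have "\<dots> \<le> t" using g by (simp add: \<Gamma>_def Gamma_def)
        finally show False using a by simp
      qed
      moreover have "h \<gamma> v = h \<gamma> (v \<inter> \<gamma>)" for v
        unfolding h_def using ex_loc[OF f\<gamma>[OF g] P1(1)[OF g], of v] ex_loc[OF f\<gamma>[OF g] P2(1)[OF g], of v]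
        by (simp add: Int_assoc)
      ultimately show "(\<Sum>v\<in>Pow K. h \<gamma> v * chi v a) = 0"
        using local_zero[OF fK \<Gamma>K[OF g] a(1)] by blast
    qed
    finally show ?thesis .
  qed
  have c_small: "c a = 0" if a: "a \<subseteq> K" "wtP n m a \<le> t" for a
  proof -
    let ?u = "uvec n l A g"
    let ?N = "(2::real) ^ card K"
    have "0 = (\<Sum>\<sigma>\<in>Pow {..<m}. D (?u \<sigma>) * chi a (?u \<sigma>))"
      using D_syn by simp
    also have "\<dots> = (\<Sum>\<sigma>\<in>Pow {..<m}. \<Sum>b\<in>Pow K. c b / ?N * (chi b (?u \<sigma>) * chi a (?u \<sigma>)))"
    proof (intro sum.cong refl)
      fix \<sigma> assume "\<sigma> \<in> Pow {..<m}"
      then have "?u \<sigma> \<subseteq> K" using uvec_sub K_def by blast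
      from four_inv[OF fK this, of D]
      show "D (?u \<sigma>) * chi a (?u \<sigma>) = (\<Sum>b\<in>Pow K. c b / ?N * (chi b (?u \<sigma>) * chi a (?u \<sigma>)))"
        unfolding c_def by (simp add: sum_distrib_right mult.assoc)
    qed
    also have "\<dots> = (\<Sum>b\<in>Pow K. c b / ?N * (\<Sum>\<sigma>\<in>Pow {..<m}. chi b (?u \<sigma>) * chi a (?u \<sigma>)))"
      unfolding sum_distrib_left by (rule sum.swap)
    also have "\<dots> = (\<Sum>b\<in>Pow K. c b / ?N * (if syn n m l A g (symd b a) = {} then 2 ^ m else 0))"
    proof (intro sum.cong refl arg_cong2[where f = "(*)"])
      fix b assume b: "b \<in> Pow K"
      have sba: "symd b a \<subseteq> K" using a b by (auto simp: symd_def)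
      have "(\<Sum>\<sigma>\<in>Pow {..<m}. chi b (?u \<sigma>) * chi a (?u \<sigma>)) = (\<Sum>\<sigma>\<in>Pow {..<m}. chi \<sigma> (syn n m l A g (symd b a)))"
      proof (intro sum.cong refl)
        fix \<sigma> assume s: "\<sigma> \<in> Pow {..<m}"
        then have us: "?u \<sigma> \<subseteq> K" using uvec_sub K_def by blast
        then have "finite (?u \<sigma>)" using fK by (rule finite_subset)
        then have "chi b (?u \<sigma>) * chi a (?u \<sigma>) = chi (symd b a) (?u \<sigma>)"
          using chi_symd[of "?u \<sigma>" b a] by (simp add: chi_comm)
        also have "\<dots> = chi \<sigma> (syn n m l A g (symd b a))"
          using syn_chi[of "symd b a" n m \<sigma> l A g] sba s by (simp add: K_def)
        finally show "chi b (?u \<sigma>) * chi a (?u \<sigma>) = chi \<sigma> (syn n m l A g (symd b a))" .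
      qed
      also have "\<dots> = (if syn n m l A g (symd b a) = {} then 2 ^ m else 0)"
      proof -
        have "syn n m l A g (symd b a) \<subseteq> {..<m}" by (auto simp: syn_def)
        from orth[OF finite_lessThan this] show ?thesis by simp
      qed
      finally show "(\<Sum>\<sigma>\<in>Pow {..<m}. chi b (?u \<sigma>) * chi a (?u \<sigma>)) = (if syn n m l A g (symd b a) = {} then 2 ^ m else 0)" .
    qed
    also have "\<dots> = c a / ?N * 2 ^ m"
    proof -
      have aK: "a \<in> Pow K" using a by simp
      have "(\<Sum>b\<in>Pow K. c b / ?N * (if syn n m l A g (symd b a) = {} then 2 ^ m else 0))
          = c a / ?N * (if syn n m l A g (symd a a) = {} then 2 ^ m else 0)
            + (\<Sum>b\<in>Pow K - {a}. c b / ?N * (if syn n m l A g (symd b a) = {} then 2 ^ m else 0))"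
        by (rule sum.remove) (use fK aK in auto)
      also have "(\<Sum>b\<in>Pow K - {a}. c b / ?N * (if syn n m l A g (symd b a) = {} then 2 ^ m else 0)) = 0"
      proof (rule sum.neutral, rule ballI)
        fix b assume b: "b \<in> Pow K - {a}"
        show "c b / ?N * (if syn n m l A g (symd b a) = {} then 2 ^ m else 0) = 0"
        proof (cases "wtP n m b \<le> t")
          case True
          have "syn n m l A g (symd b a) \<noteq> {}"
          proof
            assume "syn n m l A g (symd b a) = {}"
            then have "b = a" using dist_unique[OF assms(4), of b a] b a True by (simp add: K_def)
            then show False using b by simp
          qed
          then show ?thesis by simp
        next
          case False
          then show ?thesis using c_big[of b] b by simp
        qed
      qed
      also have "symd a a = {}" by (simp add: symd_def)
      finally show ?thesis by (simp add: syn_empty)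
    qed
    finally show ?thesis by simp
  qed
  have D0: "D u = 0" if "u \<subseteq> K" for u
  proof (rule four_inj[OF fK _ that])
    fix w assume "w \<subseteq> K"
    then show "(\<Sum>x\<in>Pow K. D x * chi x w) = 0"
      using c_big c_small unfolding c_def by blast
  qed
  have ex_eq: "ex (total_error \<Gamma> P') u = ex (total_error \<Gamma> P) u" if "u \<subseteq> K" for u
  proof -
    have fu: "finite u" using that fK by (rule finite_subset)
    have "ln (ex (total_error \<Gamma> P) u) = ln (ex (total_error \<Gamma> P') u)"
      using D0[OF that] D_eq[OF fu] by simp
    then show ?thesis using tpos1[OF fu] tpos2[OF fu] by simp
  qed
  have "total_error \<Gamma> P' = total_error \<Gamma> P"
  proof (rule pmf_eqI)
    fix x
    show "pmf (total_error \<Gamma> P') x = pmf (total_error \<Gamma> P) x"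
    proof (cases "x \<subseteq> K")
      case True
      have "(\<lambda>y. pmf (total_error \<Gamma> P') y - pmf (total_error \<Gamma> P) y) x = 0"
      proof (rule four_inj[OF fK _ True])
        fix u assume "u \<subseteq> K"
        then show "(\<Sum>y\<in>Pow K. (pmf (total_error \<Gamma> P') y - pmf (total_error \<Gamma> P) y) * chi y u) = 0"
          using ex_eq[of u] unfolding ex_def expect_sum[OF fK sub1] expect_sum[OF fK sub2]
          by (simp add: left_diff_distrib sum_subtractf)
      qed
      then show ?thesis by simp
    next
      case False
      then have "x \<notin> set_pmf (total_error \<Gamma> P')" "x \<notin> set_pmf (total_error \<Gamma> P)" using sub1 sub2 by auto
      then show ?thesis by (simp add: set_pmf_iff)
    qed
  qed
  then show ?thesis by (simp add: \<Gamma>_def)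
qed

end
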